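(* Let $p,q\ge2$ and let $\pi=(\pi_{u,v})$ be a probability law on $\{1,\dots,p\}\times\{1,\dots,q\}$ with margins $\pi_{u,\cdot}=\sum_v\pi_{u,v}$ and $\pi_{\cdot,v}=\sum_u\pi_{u,v}$. Let $(U_1,V_1)$ and $(U_2,V_2)$ be two independent draws from $\pi$. Then $$\pi_{u,v}=\frac{\pi_{u,\cdot}}{q}+\frac{\pi_{\cdot,v}}{p}-\frac{1}{pq}\quad\text{for all }u,v$$ if and only if the weighted expected number of agreements equals the weighted expected number of disagreements, namely $$\frac{\mathbb P(U_1=U_2,V_1=V_2)}{pq}+\frac{\mathbb P(U_1\ne U_2,V_1\ne V_2)}{p(p-1)q(q-1)}=\frac{\mathbb P(U_1=U_2,V_1\ne V_2)}{pq(q-1)}+\frac{\mathbb P(U_1\ne U_2,V_1=V_2)}{p(p-1)q}.$$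
   Context: An "agreement" between the two draws occurs when the two variables both coincide ($U_1=U_2$ and $V_1=V_2$) or both differ; a "disagreement" when exactly one coincides. The weights $pq$, $p(p-1)q(q-1)$, $pq(q-1)$, $p(p-1)q$ count the possible pairs of classes realizing each type. *)

theory Defs
  imports Complex_Main
begin

definition is_prob_law :: "nat \<Rightarrow> nat \<Rightarrow> (nat \<Rightarrow> nat \<Rightarrow> real) \<Rightarrow> bool" where
  "is_prob_law p q \<pi> \<longleftrightarrow>
     (\<forall>u\<in>{1..p}. \<forall>v\<in>{1..q}. 0 \<le> \<pi> u v) \<and>
     (\<Sum>u\<in>{1..p}. \<Sum>v\<in>{1..q}. \<pi> u v) = 1"

definition row_margin :: "nat \<Rightarrow> (nat \<Rightarrow> nat \<Rightarrow> real) \<Rightarrow> nat \<Rightarrow> real" where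
  "row_margin q \<pi> u = (\<Sum>v\<in>{1..q}. \<pi> u v)"

definition col_margin :: "nat \<Rightarrow> (nat \<Rightarrow> nat \<Rightarrow> real) \<Rightarrow> nat \<Rightarrow> real" where
  "col_margin p \<pi> v = (\<Sum>u\<in>{1..p}. \<pi> u v)"

text \<open>Probability that two independent draws (U1,V1), (U2,V2) from pi satisfy
  the predicate E (U1,V1) (U2,V2): the product law on pairs of draws.\<close>
definition pair_prob ::
  "nat \<Rightarrow> nat \<Rightarrow> (nat \<Rightarrow> nat \<Rightarrow> real) \<Rightarrow> (nat \<times> nat \<Rightarrow> nat \<times> nat \<Rightarrow> bool) \<Rightarrow> real" where
  "pair_prob p q \<pi> E =
     (\<Sum>x\<in>{1..p} \<times> {1..q}. \<Sum>y\<in>{1..p} \<times> {1..q}.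
        if E x y then \<pi> (fst x) (snd x) * \<pi> (fst y) (snd y) else 0)"

end

theory Submission
  imports Defs
begin

lemma sum_prod_split: "(\<Sum>x\<in>I\<times>J. g x) = (\<Sum>u\<in>I. \<Sum>v\<in>J. g (u,v))"
  by (simp add: sum.cartesian_product)

lemma pp_quad:
  "pair_prob p q \<pi> E = (\<Sum>u1\<in>{1..p}. \<Sum>v1\<in>{1..q}. \<Sum>u2\<in>{1..p}. \<Sum>v2\<in>{1..q}.
     if E (u1,v1) (u2,v2) then \<pi> u1 v1 * \<pi> u2 v2 else 0)"
  unfolding pair_prob_def sum_prod_split fst_conv snd_conv ..

lemma pp_add:
  assumes "\<And>x y. \<not> (F x y \<and> G x y)"
  shows "pair_prob p q \<pi> F + pair_prob p q \<pi> G = pair_prob p q \<pi> (\<lambda>x y. F x y \<or> G x y)"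
  unfolding pair_prob_def sum.distrib[symmetric]
  by (rule sum.cong[OF refl])+ (use assms in auto)

lemma sum_if_c: "(\<Sum>v\<in>J. if c then f v else 0) = (if c then sum f J else (0::real))"
  by simp

lemma pp_true:
  assumes "is_prob_law p q \<pi>"
  shows "pair_prob p q \<pi> (\<lambda>x y. True) = 1"
proof -
  have "pair_prob p q \<pi> (\<lambda>x y. True) = (\<Sum>u1\<in>{1..p}. \<Sum>v1\<in>{1..q}. \<pi> u1 v1 *
     (\<Sum>u2\<in>{1..p}. \<Sum>v2\<in>{1..q}. \<pi> u2 v2))"
    by (simp add: pp_quad sum_distrib_left)
  also have "\<dots> = 1" using assms unfolding is_prob_law_def
    by (simp add: sum_distrib_right[symmetric])
  finally show ?thesis .
qed

lemma pp_ee: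
  "pair_prob p q \<pi> (\<lambda>(u1,v1) (u2,v2). u1 = u2 \<and> v1 = v2)
   = (\<Sum>u\<in>{1..p}. \<Sum>v\<in>{1..q}. \<pi> u v * \<pi> u v)"
proof -
  have "pair_prob p q \<pi> (\<lambda>(u1,v1) (u2,v2). u1 = u2 \<and> v1 = v2)
     = (\<Sum>u1\<in>{1..p}. \<Sum>v1\<in>{1..q}. \<Sum>u2\<in>{1..p}. if u1 = u2 then
          (\<Sum>v2\<in>{1..q}. if v1 = v2 then \<pi> u1 v1 * \<pi> u2 v2 else 0) else 0)"
    unfolding pp_quad by (intro sum.cong refl) auto
  also have "\<dots> = (\<Sum>u\<in>{1..p}. \<Sum>v\<in>{1..q}. \<pi> u v * \<pi> u v)"
    by (intro sum.cong refl) (simp add: sum.delta)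
  finally show ?thesis .
qed

lemma pp_eu:
  "pair_prob p q \<pi> (\<lambda>(u1,v1) (u2,v2). u1 = u2)
   = (\<Sum>u\<in>{1..p}. row_margin q \<pi> u * row_margin q \<pi> u)"
proof -
  have "pair_prob p q \<pi> (\<lambda>(u1,v1) (u2,v2). u1 = u2)
     = (\<Sum>u1\<in>{1..p}. \<Sum>v1\<in>{1..q}. \<pi> u1 v1 * row_margin q \<pi> u1)"
    unfolding pp_quad row_margin_def
    apply (rule sum.cong[OF refl], rule sum.cong[OF refl])
    by (simp add: sum_if_c sum.delta sum_distrib_left)
  also have "\<dots> = (\<Sum>u\<in>{1..p}. row_margin q \<pi> u * row_margin q \<pi> u)"
    by (simp add: sum_distrib_right[symmetric] row_margin_def)
  finally show ?thesis .
qed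

lemma pp_ev:
  "pair_prob p q \<pi> (\<lambda>(u1,v1) (u2,v2). v1 = v2)
   = (\<Sum>v\<in>{1..q}. col_margin p \<pi> v * col_margin p \<pi> v)"
proof -
  have "pair_prob p q \<pi> (\<lambda>(u1,v1) (u2,v2). v1 = v2)
     = (\<Sum>u1\<in>{1..p}. \<Sum>v1\<in>{1..q}. \<Sum>v2\<in>{1..q}. \<Sum>u2\<in>{1..p}. if v1 = v2 then
          \<pi> u1 v1 * \<pi> u2 v2 else 0)"
    unfolding pp_quad
    apply (rule sum.cong[OF refl])+
    apply (subst sum.swap)
    apply simp
    done
  also have "\<dots> = (\<Sum>u1\<in>{1..p}. \<Sum>v1\<in>{1..q}. \<Sum>v2\<in>{1..q}. if v1 = v2 then
          \<pi> u1 v1 * col_margin p \<pi> v2 else 0)"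
    unfolding col_margin_def
    apply (rule sum.cong[OF refl], rule sum.cong[OF refl])
    by (simp add: sum_if_c sum.delta sum_distrib_left)
  also have "\<dots> = (\<Sum>u1\<in>{1..p}. \<Sum>v1\<in>{1..q}. \<pi> u1 v1 * col_margin p \<pi> v1)"
    by (intro sum.cong refl) (simp add: sum.delta)
  also have "\<dots> = (\<Sum>v1\<in>{1..q}. \<Sum>u1\<in>{1..p}. \<pi> u1 v1 * col_margin p \<pi> v1)"
    by (rule sum.swap)
  also have "\<dots> = (\<Sum>v\<in>{1..q}. col_margin p \<pi> v * col_margin p \<pi> v)"
    by (simp add: sum_distrib_right[symmetric] col_margin_def)
  finally show ?thesis .
qed

lemma final_alg:
  fixes p q S R C :: real
  assumes "p > 1" "q > 1"
  shows "(S / (p*q) + (1 - R - C + S) / (p*(p-1)*q*(q-1)) = (R - S)/(p*q*(q-1)) + (C - S)/(p*(p-1)*q))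
     \<longleftrightarrow> S - R/q - C/p + 1/(p*q) = 0"
proof -
  have h: "p - 1 \<noteq> 0" "q - 1 \<noteq> 0" "p \<noteq> 0" "q \<noteq> 0" using assms by auto
  define D where "D = p*(p-1)*q*(q-1)"
  have D0: "D \<noteq> 0" using h by (simp add: D_def)
  have a1: "D * (S / (p*q)) = S*(p-1)*(q-1)" using h by (simp add: D_def field_simps)
  have a2: "D * ((1 - R - C + S) / (p*(p-1)*q*(q-1))) = 1 - R - C + S"
    unfolding D_def[symmetric] using D0 by simp
  have a3: "D * ((R - S)/(p*q*(q-1))) = (R-S)*(p-1)" using h by (simp add: D_def field_simps)
  have a4: "D * ((C - S)/(p*(p-1)*q)) = (C-S)*(q-1)" using h by (simp add: D_def field_simps)
  have a5: "p*q * (S - R/q - C/p + 1/(p*q)) = p*q*S - p*R - q*C + 1" using h by (simp add: field_simps)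
  have "(S / (p*q) + (1 - R - C + S) / (p*(p-1)*q*(q-1)) = (R - S)/(p*q*(q-1)) + (C - S)/(p*(p-1)*q))
     \<longleftrightarrow> D * (S / (p*q) + (1 - R - C + S) / (p*(p-1)*q*(q-1))) = D * ((R - S)/(p*q*(q-1)) + (C - S)/(p*(p-1)*q))"
    using D0 by simp
  also have "\<dots> \<longleftrightarrow> S*(p-1)*(q-1) + (1 - R - C + S) = (R-S)*(p-1) + (C-S)*(q-1)"
    by (simp only: distrib_left a1 a2 a3 a4)
  also have "\<dots> \<longleftrightarrow> p*q*S - p*R - q*C + 1 = 0" by (auto simp: algebra_simps)
  also have "\<dots> \<longleftrightarrow> p*q * (S - R/q - C/p + 1/(p*q)) = 0" by (simp only: a5)
  also have "\<dots> \<longleftrightarrow> S - R/q - C/p + 1/(p*q) = 0" using h by simp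
  finally show ?thesis .
qed

theorem theorem6:
  fixes p q :: nat and \<pi> :: "nat \<Rightarrow> nat \<Rightarrow> real"
  assumes "p \<ge> 2" and "q \<ge> 2" and "is_prob_law p q \<pi>"
  shows "(\<forall>u\<in>{1..p}. \<forall>v\<in>{1..q}.
            \<pi> u v = row_margin q \<pi> u / real q + col_margin p \<pi> v / real p
                     - 1 / (real p * real q))
    \<longleftrightarrow>
    pair_prob p q \<pi> (\<lambda>(u1,v1) (u2,v2). u1 = u2 \<and> v1 = v2) / (real p * real q)
    + pair_prob p q \<pi> (\<lambda>(u1,v1) (u2,v2). u1 \<noteq> u2 \<and> v1 \<noteq> v2)
        / (real p * (real p - 1) * real q * (real q - 1))
    = pair_prob p q \<pi> (\<lambda>(u1,v1) (u2,v2). u1 = u2 \<and> v1 \<noteq> v2)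
        / (real p * real q * (real q - 1))
    + pair_prob p q \<pi> (\<lambda>(u1,v1) (u2,v2). u1 \<noteq> u2 \<and> v1 = v2)
        / (real p * (real p - 1) * real q)"
proof -
  define r where "r = row_margin q \<pi>"
  define c where "c = col_margin p \<pi>"
  define S where "S = (\<Sum>u\<in>{1..p}. \<Sum>v\<in>{1..q}. \<pi> u v * \<pi> u v)"
  define R where "R = (\<Sum>u\<in>{1..p}. r u * r u)"
  define C where "C = (\<Sum>v\<in>{1..q}. c v * c v)"
  define P where "P = pair_prob p q \<pi>"
  define Pee where "Pee = P (\<lambda>(u1,v1) (u2,v2). u1 = u2 \<and> v1 = v2)"
  define Pen where "Pen = P (\<lambda>(u1,v1) (u2,v2). u1 = u2 \<and> v1 \<noteq> v2)"
  define Pne where "Pne = P (\<lambda>(u1,v1) (u2,v2). u1 \<noteq> u2 \<and> v1 = v2)"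
  define Pnn where "Pnn = P (\<lambda>(u1,v1) (u2,v2). u1 \<noteq> u2 \<and> v1 \<noteq> v2)"
  have ee: "Pee = S" unfolding Pee_def P_def S_def by (rule pp_ee)
  have PU: "P (\<lambda>(u1,v1) (u2,v2). u1 = u2) = R" unfolding P_def R_def r_def by (rule pp_eu)
  have PV: "P (\<lambda>(u1,v1) (u2,v2). v1 = v2) = C" unfolding P_def C_def c_def by (rule pp_ev)
  have PT: "P (\<lambda>x y. True) = 1" unfolding P_def by (rule pp_true[OF assms(3)])
  have "P (\<lambda>(u1,v1) (u2,v2). u1 = u2) = P (\<lambda>x y. (\<lambda>(u1,v1) (u2,v2). u1 = u2 \<and> v1 = v2) x y
      \<or> (\<lambda>(u1,v1) (u2,v2). u1 = u2 \<and> v1 \<noteq> v2) x y)"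
    by (rule arg_cong[where f=P]) (auto simp: fun_eq_iff)
  also have "\<dots> = Pee + Pen" unfolding P_def Pee_def Pen_def by (rule pp_add[symmetric]) auto
  finally have en: "Pen = R - S" using PU ee by simp
  have "P (\<lambda>(u1,v1) (u2,v2). v1 = v2) = P (\<lambda>x y. (\<lambda>(u1,v1) (u2,v2). u1 = u2 \<and> v1 = v2) x y
      \<or> (\<lambda>(u1,v1) (u2,v2). u1 \<noteq> u2 \<and> v1 = v2) x y)"
    by (rule arg_cong[where f=P]) (auto simp: fun_eq_iff)
  also have "\<dots> = Pee + Pne" unfolding P_def Pee_def Pne_def by (rule pp_add[symmetric]) auto
  finally have ne: "Pne = C - S" using PV ee by simp
  have "P (\<lambda>x y. True) = P (\<lambda>x y. (\<lambda>x y. (\<lambda>(u1,v1) (u2,v2). u1 = u2) x y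
      \<or> (\<lambda>(u1,v1) (u2,v2). u1 \<noteq> u2 \<and> v1 = v2) x y) x y \<or>
      (\<lambda>(u1,v1) (u2,v2). u1 \<noteq> u2 \<and> v1 \<noteq> v2) x y)"
    by (rule arg_cong[where f=P]) (auto simp: fun_eq_iff)
  also have "\<dots> = P (\<lambda>x y. (\<lambda>(u1,v1) (u2,v2). u1 = u2) x y
      \<or> (\<lambda>(u1,v1) (u2,v2). u1 \<noteq> u2 \<and> v1 = v2) x y) + Pnn"
    unfolding P_def Pnn_def by (rule pp_add[symmetric]) auto
  also have "P (\<lambda>x y. (\<lambda>(u1,v1) (u2,v2). u1 = u2) x y
      \<or> (\<lambda>(u1,v1) (u2,v2). u1 \<noteq> u2 \<and> v1 = v2) x y) = R + Pne"
    unfolding P_def Pne_def PU[symmetric, unfolded P_def] by (rule pp_add[symmetric]) auto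
  finally have nn: "Pnn = 1 - R - C + S" using PT ne by simp
  have pq: "real p > 1" "real q > 1" using assms by auto
  define e where "e u v = \<pi> u v - r u / real q - c v / real p + 1 / (real p * real q)" for u v
  have sr: "(\<Sum>u\<in>{1..p}. r u) = 1" using assms(3) unfolding is_prob_law_def r_def row_margin_def by simp
  have sw: "(\<Sum>v\<in>{1..q}. \<Sum>u\<in>{1..p}. \<pi> u v) = (\<Sum>u\<in>{1..p}. \<Sum>v\<in>{1..q}. \<pi> u v)"
    by (rule sum.swap)
  have sc: "(\<Sum>v\<in>{1..q}. c v) = 1" using assms(3) unfolding is_prob_law_def c_def col_margin_def sw
    by simp
  have rr0: "(\<Sum>v\<in>{1..q}. \<pi> u v) = r u" for u by (simp add: r_def row_margin_def)
  have cc0: "(\<Sum>u\<in>{1..p}. \<pi> u v) = c v" for v by (simp add: c_def col_margin_def)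
  have ev0: "(\<Sum>v\<in>{1..q}. e u v) = 0" for u
    using pq unfolding e_def sum.distrib sum_subtractf sum_divide_distrib[symmetric] rr0 sc
    by simp
  have eu0: "(\<Sum>u\<in>{1..p}. e u v) = 0" for v
    using pq unfolding e_def sum.distrib sum_subtractf sum_divide_distrib[symmetric] cc0 sr
    by simp
  have tt: "(\<Sum>u\<in>{1..p}. \<Sum>v\<in>{1..q}. \<pi> u v) = 1" using assms(3) by (simp add: is_prob_law_def)
  have pt: "e u v * e u v = e u v * \<pi> u v - r u / real q * e u v - c v / real p * e u v
      + e u v / (real p * real q)" for u v
  proof -
    have "e u v * e u v = e u v * (\<pi> u v - r u / real q - c v / real p + 1 / (real p * real q))"
      by (simp add: e_def)
    also have "\<dots> = e u v * \<pi> u v - r u / real q * e u v - c v / real p * e u v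
      + e u v / (real p * real q)" by (simp add: algebra_simps)
    finally show ?thesis .
  qed
  have pt2: "e u v * \<pi> u v = \<pi> u v * \<pi> u v - r u / real q * \<pi> u v - c v / real p * \<pi> u v
      + \<pi> u v / (real p * real q)" for u v
    by (simp add: e_def algebra_simps)
  have z1: "(\<Sum>u\<in>{1..p}. \<Sum>v\<in>{1..q}. r u / real q * e u v) = 0"
    unfolding sum_distrib_left[symmetric] ev0 by simp
  have z2: "(\<Sum>u\<in>{1..p}. \<Sum>v\<in>{1..q}. c v / real p * e u v) = 0"
    apply (subst sum.swap)
    unfolding sum_distrib_left[symmetric] eu0 by simp
  have z3: "(\<Sum>u\<in>{1..p}. \<Sum>v\<in>{1..q}. e u v / (real p * real q)) = 0"
    unfolding sum_divide_distrib[symmetric] ev0 by simp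
  have y1: "(\<Sum>u\<in>{1..p}. \<Sum>v\<in>{1..q}. r u / real q * \<pi> u v) = R / real q"
    unfolding sum_distrib_left[symmetric] rr0 R_def sum_divide_distrib by (simp add: algebra_simps)
  have y2: "(\<Sum>u\<in>{1..p}. \<Sum>v\<in>{1..q}. c v / real p * \<pi> u v) = C / real p"
    apply (subst sum.swap)
    unfolding sum_distrib_left[symmetric] cc0 C_def sum_divide_distrib by (simp add: algebra_simps)
  have y3: "(\<Sum>u\<in>{1..p}. \<Sum>v\<in>{1..q}. \<pi> u v / (real p * real q)) = 1 / (real p * real q)"
    unfolding sum_divide_distrib[symmetric] tt ..
  have key: "(\<Sum>u\<in>{1..p}. \<Sum>v\<in>{1..q}. e u v * e u v) = S - R / real q - C / real p + 1/(real p * real q)"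
  proof -
    have "(\<Sum>u\<in>{1..p}. \<Sum>v\<in>{1..q}. e u v * e u v) =
      (\<Sum>u\<in>{1..p}. \<Sum>v\<in>{1..q}. e u v * \<pi> u v)
      - (\<Sum>u\<in>{1..p}. \<Sum>v\<in>{1..q}. r u / real q * e u v)
      - (\<Sum>u\<in>{1..p}. \<Sum>v\<in>{1..q}. c v / real p * e u v)
      + (\<Sum>u\<in>{1..p}. \<Sum>v\<in>{1..q}. e u v / (real p * real q))"
      unfolding pt sum.distrib sum_subtractf ..
    also have "\<dots> = (\<Sum>u\<in>{1..p}. \<Sum>v\<in>{1..q}. e u v * \<pi> u v)" unfolding z1 z2 z3 by simp
    also have "\<dots> = S
      - (\<Sum>u\<in>{1..p}. \<Sum>v\<in>{1..q}. r u / real q * \<pi> u v)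
      - (\<Sum>u\<in>{1..p}. \<Sum>v\<in>{1..q}. c v / real p * \<pi> u v)
      + (\<Sum>u\<in>{1..p}. \<Sum>v\<in>{1..q}. \<pi> u v / (real p * real q))"
      unfolding pt2 sum.distrib sum_subtractf S_def ..
    also have "\<dots> = S - R / real q - C / real p + 1/(real p * real q)"
      unfolding y1 y2 y3 ..
    finally show ?thesis .
  qed
  have "(\<forall>u\<in>{1..p}. \<forall>v\<in>{1..q}. e u v = 0) \<longleftrightarrow> (\<Sum>u\<in>{1..p}. \<Sum>v\<in>{1..q}. e u v * e u v) = 0"
    by (simp add: sum_nonneg_eq_0_iff sum_nonneg)
  moreover have "(\<forall>u\<in>{1..p}. \<forall>v\<in>{1..q}.
            \<pi> u v = row_margin q \<pi> u / real q + col_margin p \<pi> v / real p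
                     - 1 / (real p * real q)) \<longleftrightarrow> (\<forall>u\<in>{1..p}. \<forall>v\<in>{1..q}. e u v = 0)"
  proof -
    have *: "\<And>x a b d::real. (x = a + b - d) = (x - a - b + d = 0)" by linarith
    show ?thesis unfolding e_def r_def c_def * ..
  qed
  moreover have "(pair_prob p q \<pi> (\<lambda>(u1,v1) (u2,v2). u1 = u2 \<and> v1 = v2) / (real p * real q)
    + pair_prob p q \<pi> (\<lambda>(u1,v1) (u2,v2). u1 \<noteq> u2 \<and> v1 \<noteq> v2)
        / (real p * (real p - 1) * real q * (real q - 1))
    = pair_prob p q \<pi> (\<lambda>(u1,v1) (u2,v2). u1 = u2 \<and> v1 \<noteq> v2)
        / (real p * real q * (real q - 1))
    + pair_prob p q \<pi> (\<lambda>(u1,v1) (u2,v2). u1 \<noteq> u2 \<and> v1 = v2)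
        / (real p * (real p - 1) * real q)) \<longleftrightarrow> S - R / real q - C / real p + 1/(real p * real q) = 0"
    unfolding ee[unfolded Pee_def P_def] en[unfolded Pen_def P_def] ne[unfolded Pne_def P_def]
      nn[unfolded Pnn_def P_def]
    by (rule final_alg[OF pq])
  ultimately show ?thesis unfolding key by simp
qed

end
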